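(* Let $(G,* )$ be a topological group satisfying ${\sf S}_c(\mathcal{O}_{\sf nbd},\mathcal{O})$ and let $(H,* )$ be a topological group satisfying ${\sf S}_c(\mathcal{O}_{\sf nbd},\mathcal{O}^{cgp})$. Then the product group $G\times H$ satisfies ${\sf S}_c(\mathcal{O}_{\sf nbd},\mathcal{O})$.
   Context: For a topological group $(G,* )$ with identity $e$ and a neighborhood $U$ of $e$, $\mathcal{O}(U)=\{x*U:x\in G\}$ and $\mathcal{O}_{\sf nbd}=\{\mathcal{O}(U):U\text{ a neighborhood of }e\}$. $\mathcal{O}$ is the collection of all open covers. An open cover $\mathcal{U}$ is c-groupable if there is a partition $\mathcal{U}=\bigcup_{n<\infty}\mathcal{U}_n$ where each $\mathcal{U}_n$ is pairwise disjoint and each point lies in all but finitely many of the sets $\bigcup\mathcal{U}_n$; $\mathcal{O}^{cgp}$ denotes the collection of c-groupable open covers. A family $\mathcal{B}$ refines $\mathcal{A}$ if every member of $\mathcal{B}$ is contained in some member of $\mathcal{A}$. ${\sf S}_c(\mathcal{A},\mathcal{B})$: for each sequence $(A_n:n<\infty)$ of elements of $\mathcal{A}$ there is a sequence $(B_n:n<\infty)$ such that each $B_n$ is a pairwise disjoint family of open sets refining $A_n$ and $\bigcup_nB_n\in\mathcal{B}$. *)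

theory Defs
  imports "HOL-Analysis.Analysis"
begin

text \<open>Topological groups are modelled by the type class topological_group_add
  (group operation written additively, not assumed commutative, identity 0).
  The selection principle is stated for an explicit group operation m and identity e
  on a topological space type, so that it can also be applied to the product group.\<close>

definition open_cover :: "'a::topological_space set set \<Rightarrow> bool" where
  "open_cover C \<longleftrightarrow> (\<forall>V\<in>C. open V) \<and> \<Union>C = UNIV"

definition cgp_cover :: "'a::topological_space set set \<Rightarrow> bool" where
  "cgp_cover C \<longleftrightarrow> open_cover C \<and>
     (\<exists>P :: nat \<Rightarrow> 'a set set.
        (\<Union>n. P n) = C \<and>
        (\<forall>n k. n \<noteq> k \<longrightarrow> P n \<inter> P k = {}) \<and>
        (\<forall>n. disjoint (P n)) \<and>
        (\<forall>x. \<forall>\<^sub>F n in sequentially. x \<in> \<Union>(P n)))"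

definition Sc_nbd :: "('a::topological_space \<Rightarrow> 'a \<Rightarrow> 'a) \<Rightarrow> 'a \<Rightarrow> ('a set set \<Rightarrow> bool) \<Rightarrow> bool" where
  "Sc_nbd m e Target \<longleftrightarrow>
     (\<forall>U :: nat \<Rightarrow> 'a set. (\<forall>n. open (U n) \<and> e \<in> U n) \<longrightarrow>
        (\<exists>B :: nat \<Rightarrow> 'a set set.
           (\<forall>n. (\<forall>b\<in>B n. open b) \<and> disjoint (B n) \<and>
                (\<forall>b\<in>B n. \<exists>x. b \<subseteq> m x ` U n)) \<and>
           Target (\<Union>n. B n)))"

definition prod_op :: "('a::plus \<times> 'b::plus) \<Rightarrow> 'a \<times> 'b \<Rightarrow> 'a \<times> 'b" where
  "prod_op p q = (fst p + fst q, snd p + snd q)"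

end

theory Submission
  imports Defs
begin

lemma rect_disj:
  assumes "disjnt a a' \<or> disjnt c c'"
  shows "disjnt (a \<times> c) (a' \<times> c')"
  using assms by (auto simp: disjnt_def)

lemma rect_sub:
  fixes x :: "'a::plus" and y :: "'b::plus"
  assumes "a \<subseteq> (+) x ` S" "c \<subseteq> (+) y ` T" "S \<times> T \<subseteq> W"
  shows "a \<times> c \<subseteq> prod_op (x, y) ` W"
proof
  fix p assume "p \<in> a \<times> c"
  then obtain s t where st: "s \<in> S" "t \<in> T" "fst p = x + s" "snd p = y + t"
    using assms(1,2) by (cases p) (metis fst_conv snd_conv mem_Times_iff image_iff subsetD)
  then have "p = prod_op (x, y) (s, t)" by (cases p) (simp add: prod_op_def)
  moreover have "(s, t) \<in> W" using st assms(3) by blast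
  ultimately show "p \<in> prod_op (x, y) ` W" by blast
qed

theorem theorem3p1:
  assumes "Sc_nbd ((+) :: 'a::topological_group_add \<Rightarrow> 'a \<Rightarrow> 'a) 0 open_cover"
      and "Sc_nbd ((+) :: 'b::topological_group_add \<Rightarrow> 'b \<Rightarrow> 'b) 0 cgp_cover"
  shows "Sc_nbd (prod_op :: 'a \<times> 'b \<Rightarrow> 'a \<times> 'b \<Rightarrow> 'a \<times> 'b) (0, 0) open_cover"
  unfolding Sc_nbd_def
proof (intro allI impI)
  fix W :: "nat \<Rightarrow> ('a \<times> 'b) set"
  assume W: "\<forall>n. open (W n) \<and> (0, 0) \<in> W n"
  have "\<forall>n. \<exists>S T. open S \<and> open T \<and> (0::'a, 0::'b) \<in> S \<times> T \<and> S \<times> T \<subseteq> W n"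
  proof
    fix n
    have "open (W n)" "(0::'a, 0::'b) \<in> W n" using W by auto
    then show "\<exists>S T. open S \<and> open T \<and> (0::'a, 0::'b) \<in> S \<times> T \<and> S \<times> T \<subseteq> W n"
      unfolding open_prod_def by blast
  qed
  then obtain UG UH where UGH: "\<And>n. open (UG n :: 'a set) \<and> open (UH n :: 'b set) \<and>
      (0::'a, 0::'b) \<in> UG n \<times> UH n \<and> UG n \<times> UH n \<subseteq> W n"
    by metis
  define UG' where "UG' n = (\<Inter>i\<le>n. UG i)" for n
  define UH' where "UH' n = (\<Inter>i\<le>n. UH i)" for n
  have UG'o: "open (UG' n) \<and> (0::'a) \<in> UG' n" for n
    using UGH unfolding UG'_def by (auto intro!: open_INT)
  have UH'o: "open (UH' n) \<and> (0::'b) \<in> UH' n" for n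
    using UGH unfolding UH'_def by (auto intro!: open_INT)
  have UG'm: "i \<le> n \<Longrightarrow> UG' n \<subseteq> UG i" for i n unfolding UG'_def by auto
  have UH'm: "i \<le> n \<Longrightarrow> UH' n \<subseteq> UH i" for i n unfolding UH'_def by auto
  have preH: "\<forall>n. open (UH' (2*n+1)) \<and> (0::'b) \<in> UH' (2*n+1)" using UH'o by blast
  have exC: "\<exists>B :: nat \<Rightarrow> 'b set set. (\<forall>n. (\<forall>b\<in>B n. open b) \<and> disjoint (B n) \<and> (\<forall>b\<in>B n. \<exists>y. b \<subseteq> (+) y ` UH' (2*n+1))) \<and> cgp_cover (\<Union>n. B n)"
    using spec[OF assms(2)[unfolded Sc_nbd_def], of "\<lambda>n. UH' (2*n+1)"] preH by (rule mp)
  then obtain C :: "nat \<Rightarrow> 'b set set" where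
    CC: "(\<forall>n. (\<forall>b\<in>C n. open b) \<and> disjoint (C n) \<and> (\<forall>b\<in>C n. \<exists>y. b \<subseteq> (+) y ` UH' (2*n+1))) \<and> cgp_cover (\<Union>n. C n)"
    by (rule exE)
  have C1: "(\<forall>b\<in>C n. open b) \<and> disjoint (C n) \<and> (\<forall>b\<in>C n. \<exists>y. b \<subseteq> (+) y ` UH' (2*n+1))" for n
    using CC[THEN conjunct1] by (rule spec)
  have C2: "cgp_cover (\<Union>n. C n)" using CC by (rule conjunct2)
  have "\<exists>P :: nat \<Rightarrow> 'b set set. (\<Union>n. P n) = (\<Union>n. C n) \<and>
        (\<forall>n k. n \<noteq> k \<longrightarrow> P n \<inter> P k = {}) \<and>
        (\<forall>n. disjoint (P n)) \<and>
        (\<forall>x. \<forall>\<^sub>F n in sequentially. x \<in> \<Union>(P n))"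
    using C2 unfolding cgp_cover_def by (rule conjunct2)
  then obtain P :: "nat \<Rightarrow> 'b set set" where PP: "(\<Union>n. P n) = (\<Union>n. C n) \<and>
        (\<forall>n k. n \<noteq> k \<longrightarrow> P n \<inter> P k = {}) \<and>
        (\<forall>n. disjoint (P n)) \<and>
        (\<forall>x. \<forall>\<^sub>F n in sequentially. x \<in> \<Union>(P n))" by (rule exE)
  have P1: "(\<Union>n. P n) = (\<Union>n. C n)" using PP by (rule conjunct1)
  have P2: "\<And>n k. n \<noteq> k \<Longrightarrow> P n \<inter> P k = {}" using PP[THEN conjunct2, THEN conjunct1] by simp
  have P3: "\<And>n. disjoint (P n)" using PP[THEN conjunct2, THEN conjunct2, THEN conjunct1] by (rule spec)
  have P4: "\<And>y. \<forall>\<^sub>F n in sequentially. y \<in> \<Union>(P n)" using PP[THEN conjunct2, THEN conjunct2, THEN conjunct2] by (rule spec)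
  have "\<forall>j. \<exists>A :: nat \<Rightarrow> 'a set set.
           (\<forall>i. (\<forall>b\<in>A i. open b) \<and> disjoint (A i) \<and>
                (\<forall>b\<in>A i. \<exists>x. b \<subseteq> (+) x ` UG' (2 * prod_encode (j, i) + 1))) \<and>
           open_cover (\<Union>i. A i)"
  proof
    fix j
    show "\<exists>A :: nat \<Rightarrow> 'a set set.
           (\<forall>i. (\<forall>b\<in>A i. open b) \<and> disjoint (A i) \<and>
                (\<forall>b\<in>A i. \<exists>x. b \<subseteq> (+) x ` UG' (2 * prod_encode (j, i) + 1))) \<and>
           open_cover (\<Union>i. A i)"
      using spec[OF assms(1)[unfolded Sc_nbd_def], of "\<lambda>i. UG' (2 * prod_encode (j, i) + 1)"]
      by (rule mp) (simp add: UG'o)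
  qed
  then have "\<exists>A' :: nat \<Rightarrow> nat \<Rightarrow> 'a set set. \<forall>j.
           (\<forall>i. (\<forall>b\<in>A' j i. open b) \<and> disjoint (A' j i) \<and>
                (\<forall>b\<in>A' j i. \<exists>x. b \<subseteq> (+) x ` UG' (2 * prod_encode (j, i) + 1))) \<and>
           open_cover (\<Union>i. A' j i)"
    by (rule choice)
  then obtain A' :: "nat \<Rightarrow> nat \<Rightarrow> 'a set set" where
    A'0: "\<forall>j.
           (\<forall>i. (\<forall>b\<in>A' j i. open b) \<and> disjoint (A' j i) \<and>
                (\<forall>b\<in>A' j i. \<exists>x. b \<subseteq> (+) x ` UG' (2 * prod_encode (j, i) + 1))) \<and>
           open_cover (\<Union>i. A' j i)"
    by (rule exE)
  have A'1: "(\<forall>b\<in>A' j i. open b) \<and> disjoint (A' j i) \<and>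
                (\<forall>b\<in>A' j i. \<exists>x. b \<subseteq> (+) x ` UG' (2 * prod_encode (j, i) + 1))" for j i
    using A'0[THEN spec[of _ j], THEN conjunct1] by (rule spec)
  have A'2: "open_cover (\<Union>i. A' j i)" for j using A'0[THEN spec[of _ j]] by (rule conjunct2)
  define A where "A k = A' (fst (prod_decode k)) (snd (prod_decode k))" for k
  have A1: "(\<forall>b\<in>A k. open b) \<and> disjoint (A k) \<and> (\<forall>b\<in>A k. \<exists>x. b \<subseteq> (+) x ` UG' (2 * k + 1))" for k
    using A'1[of "fst (prod_decode k)" "snd (prod_decode k)"] unfolding A_def by simp
  have A2: "A (prod_encode (j, i)) = A' j i" for j i unfolding A_def by simp
  define lev where "lev c = (LEAST n. c \<in> C n)" for c
  have lev: "c \<in> (\<Union>n. C n) \<Longrightarrow> c \<in> C (lev c)" for c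
    unfolding lev_def by (auto intro: LeastI)
  define B where "B m = (if even m then
      {a \<times> c | a c k. c \<in> C (m div 2) \<and> lev c = m div 2 \<and> c \<in> P k \<and> m div 2 \<le> k \<and> a \<in> A k}
    else {a \<times> c | a c k. c \<in> P k \<and> k = m div 2 \<and> k < lev c \<and> a \<in> A k})" for m
  have Be: "\<exists>a c k. b = a \<times> c \<and> c \<in> C (m div 2) \<and> lev c = m div 2 \<and> c \<in> P k \<and> m div 2 \<le> k \<and> a \<in> A k"
    if "even m" "b \<in> B m" for b m
    using that(2) by (simp only: B_def if_P[OF that(1)] mem_Collect_eq)
  have Bo: "\<exists>a c k. b = a \<times> c \<and> c \<in> P k \<and> k = m div 2 \<and> k < lev c \<and> a \<in> A k"
    if "odd m" "b \<in> B m" for b m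
    using that(2) by (simp only: B_def if_not_P[OF that(1)] mem_Collect_eq)
  have Ba: "\<exists>a c k. b = a \<times> c \<and> a \<in> A k \<and> c \<in> P k" if "b \<in> B m" for b m
  proof (cases "even m")
    case True then show ?thesis using Be[OF True that] by blast
  next
    case False then show ?thesis using Bo[OF False that] by blast
  qed
  have Pk: "c \<in> P k \<Longrightarrow> c \<in> P k' \<Longrightarrow> k = k'" for c k k' using P2 by blast
  have PC: "c \<in> P k \<Longrightarrow> c \<in> C (lev c)" for c k using P1 lev by blast
  show "\<exists>B :: nat \<Rightarrow> ('a \<times> 'b) set set.
           (\<forall>n. (\<forall>b\<in>B n. open b) \<and> disjoint (B n) \<and>
                (\<forall>b\<in>B n. \<exists>x. b \<subseteq> prod_op x ` W n)) \<and>
           open_cover (\<Union>n. B n)"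
  proof (intro exI conjI allI)
    fix m
    show "\<forall>b\<in>B m. open b"
    proof
      fix b assume "b \<in> B m"
      then obtain a c k where h: "b = a \<times> c" "a \<in> A k" "c \<in> P k"
        using Ba by blast
      have "open a" using A1[of k] h(2) by blast
      moreover have "open c" using C1[of "lev c"] PC[OF h(3)] by blast
      ultimately show "open b" using h(1) by (simp add: open_Times)
    qed
    show "disjoint (B m)"
      unfolding pairwise_def
    proof (intro ballI impI)
      fix b b' assume bb: "b \<in> B m" "b' \<in> B m" "b \<noteq> b'"
      show "disjnt b b'"
      proof (cases "even m")
        case True
        obtain a c k where h1: "b = a \<times> c" "c \<in> C (m div 2)" "c \<in> P k" "a \<in> A k"
          using Be[OF True bb(1)] by blast
        obtain a' c' k' where h2: "b' = a' \<times> c'" "c' \<in> C (m div 2)" "c' \<in> P k'" "a' \<in> A k'"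
          using Be[OF True bb(2)] by blast
        note h = h1 h2
        show ?thesis
        proof (cases "c = c'")
          case True
          then have "k = k'" using h Pk by blast
          moreover have "a \<noteq> a'" using True h bb(3) by blast
          ultimately have "disjnt a a'" using h A1[of k] by (auto simp: pairwise_def)
          then show ?thesis unfolding h(1) h(5) by (intro rect_disj) simp
        next
          case False
          then have "disjnt c c'" using h C1[of "m div 2"] by (auto simp: pairwise_def)
          then show ?thesis unfolding h(1) h(5) by (intro rect_disj) simp
        qed
      next
        case False
        obtain a c k where h1: "b = a \<times> c" "c \<in> P k" "k = m div 2" "a \<in> A k"
          using Bo[OF False bb(1)] by blast
        obtain a' c' k' where h2: "b' = a' \<times> c'" "c' \<in> P k'" "k' = m div 2" "a' \<in> A k'"
          using Bo[OF False bb(2)] by blast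
        note h = h1 h2
        have "a \<noteq> a' \<or> c \<noteq> c'" using h bb(3) by blast
        then have "disjnt a a' \<or> disjnt c c'" using h A1[of "m div 2"] P3[of "m div 2"]
          by (auto simp: pairwise_def)
        then show ?thesis unfolding h(1) h(5) by (rule rect_disj)
      qed
    qed
    show "\<forall>b\<in>B m. \<exists>x. b \<subseteq> prod_op x ` W m"
    proof
      fix b assume bB: "b \<in> B m"
      show "\<exists>x. b \<subseteq> prod_op x ` W m"
      proof (cases "even m")
        case True
        obtain a c k where
          h: "b = a \<times> c" "c \<in> C (m div 2)" "c \<in> P k" "m div 2 \<le> k" "a \<in> A k"
          using Be[OF True bB] by blast
        obtain x where x: "a \<subseteq> (+) x ` UG' (2*k+1)" using A1 h by blast
        obtain y where y: "c \<subseteq> (+) y ` UH' (2*(m div 2)+1)" using C1 h by blast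
        have le1: "m \<le> 2*k+1" using h(4) True by presburger
        have le2: "m \<le> 2*(m div 2)+1" by presburger
        have s1: "a \<subseteq> (+) x ` UG m" using x image_mono[OF UG'm[OF le1]] by (rule subset_trans)
        have s2: "c \<subseteq> (+) y ` UH m" using y image_mono[OF UH'm[OF le2]] by (rule subset_trans)
        have st: "UG m \<times> UH m \<subseteq> W m" using UGH[of m] by blast
        have "b \<subseteq> prod_op (x, y) ` W m" unfolding h(1) by (rule rect_sub[OF s1 s2 st])
        then show ?thesis by blast
      next
        case False
        obtain a c k where
          h: "b = a \<times> c" "c \<in> P k" "k = m div 2" "k < lev c" "a \<in> A k"
          using Bo[OF False bB] by blast
        obtain x where x: "a \<subseteq> (+) x ` UG' (2*k+1)" using A1 h by blast
        obtain y where y: "c \<subseteq> (+) y ` UH' (2*(lev c)+1)" using C1 PC h by blast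
        have m: "m = 2*k+1" using False h(3) by presburger
        have le1: "m \<le> 2*k+1" using m by simp
        have le2: "m \<le> 2*(lev c)+1" using m h(4) by simp
        have s1: "a \<subseteq> (+) x ` UG m" using x image_mono[OF UG'm[OF le1]] by (rule subset_trans)
        have s2: "c \<subseteq> (+) y ` UH m" using y image_mono[OF UH'm[OF le2]] by (rule subset_trans)
        have st: "UG m \<times> UH m \<subseteq> W m" using UGH[of m] by blast
        have "b \<subseteq> prod_op (x, y) ` W m" unfolding h(1) by (rule rect_sub[OF s1 s2 st])
        then show ?thesis by blast
      qed
    qed
  next
    show "open_cover (\<Union>n. B n)"
      unfolding open_cover_def
    proof (intro conjI)
      show "\<forall>V\<in>\<Union>n. B n. open V"
      proof
        fix b assume "b \<in> (\<Union>n. B n)"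
        then obtain m where "b \<in> B m" by blast
        then obtain a c k where h: "b = a \<times> c" "a \<in> A k" "c \<in> P k"
          using Ba by blast
        have "open a" using A1[of k] h(2) by blast
        moreover have "open c" using C1[of "lev c"] PC[OF h(3)] by blast
        ultimately show "open b" using h(1) by (simp add: open_Times)
      qed
      show "\<Union>(\<Union>n. B n) = UNIV"
      proof (rule set_eqI, rule iffI)
        fix p :: "'a \<times> 'b"
        obtain x y where p: "p = (x, y)" by (cases p)
        obtain k0 where k0: "\<And>k. k \<ge> k0 \<Longrightarrow> y \<in> \<Union>(P k)"
          using P4[of y] unfolding eventually_sequentially by blast
        have eqU: "\<Union>(\<Union>i. A' k0 i) = UNIV" using A'2[of k0] unfolding open_cover_def by (rule conjunct2)
        have "x \<in> \<Union>(\<Union>i. A' k0 i)" by (simp only: eqU UNIV_I)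
        then obtain i a where a: "a \<in> A' k0 i" "x \<in> a" by blast
        define k where "k = prod_encode (k0, i)"
        have "k \<ge> k0" unfolding k_def prod_encode_def by (simp add: triangle_def)
        then obtain c where c: "c \<in> P k" "y \<in> c" using k0 by blast
        have aA: "a \<in> A k" using a A2 k_def by simp
        show "p \<in> \<Union>(\<Union>n. B n)"
        proof (cases "lev c \<le> k")
          case True
          have e: "(2 * lev c) div 2 = lev c" "even (2 * lev c)" by simp_all
          have "\<exists>a' c' k'. a \<times> c = a' \<times> c' \<and> c' \<in> C (lev c) \<and> lev c' = lev c \<and> c' \<in> P k' \<and> lev c \<le> k' \<and> a' \<in> A k'"
            using PC c aA True by blast
          then have "a \<times> c \<in> B (2 * lev c)"
            by (simp only: B_def if_P[OF e(2)] mem_Collect_eq e(1))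
          then show ?thesis using a c p by blast
        next
          case False
          have e: "(2 * k + 1) div 2 = k" "odd (2 * k + 1)" by simp_all
          have "\<exists>a' c' k'. a \<times> c = a' \<times> c' \<and> c' \<in> P k' \<and> k' = k \<and> k' < lev c' \<and> a' \<in> A k'"
            using c aA False by (metis not_le)
          then have "a \<times> c \<in> B (2 * k + 1)"
            by (simp only: B_def if_not_P[OF e(2)] mem_Collect_eq e(1))
          then show ?thesis using a c p by blast
        qed
      qed simp
    qed
  qed
qed

end
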